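(* Let $\mathsf V$ be a quantale, $f:(X,a)\to(Y,b)$ a $\mathsf V$-functor and $s=(x_n)_{n\in\mathbb N}$ a Cauchy sequence in $X$; let $f(s)=(f(x_n))_{n\in\mathbb N}$. Then $\varphi_{f(s)}=f_*\cdot\varphi_s$ and $\psi_{f(s)}=\psi_s\cdot f^*$, i.e. for all $y\in Y$, $\varphi_{f(s)}(y)=\bigvee_{x\in X}\varphi_s(x)\otimes b(f(x),y)$ and $\psi_{f(s)}(y)=\bigvee_{x\in X}b(y,f(x))\otimes\psi_s(x)$.
   Context: A quantale $(\mathsf V,\otimes,k)$ is a complete anti-symmetric lattice with an associative, commutative operation $\otimes$ with neutral element $k$ distributing over arbitrary suprema. A $\mathsf V$-category $(X,a)$ is a set with $a:X\times X\to\mathsf V$ such that $k\le a(x,x)$ and $a(x,y)\otimes a(y,z)\le a(x,z)$; a $\mathsf V$-functor $f:(X,a)\to(Y,b)$ satisfies $a(x,y)\le b(f(x),f(y))$. A sequence $s=(x_n)$ in $(X,a)$ is Cauchy if $k\le\bigvee_{N}\bigwedge_{n,m\ge N}a(x_n,x_m)$; $\varphi_s(x)=\bigvee_N\bigwedge_{n\ge N}a(x_n,x)$ and $\psi_s(x)=\bigvee_N\bigwedge_{n\ge N}a(x,x_n)$ (similarly in $Y$ with $b$). *)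

theory Defs
  imports Main
begin

definition quantale :: "('v::complete_lattice \<Rightarrow> 'v \<Rightarrow> 'v) \<Rightarrow> 'v \<Rightarrow> bool" where
  "quantale tens k \<longleftrightarrow>
     (\<forall>u v w. tens (tens u v) w = tens u (tens v w)) \<and>
     (\<forall>u v. tens u v = tens v u) \<and>
     (\<forall>u. tens k u = u) \<and>
     (\<forall>u S. tens u (Sup S) = (SUP v\<in>S. tens u v))"

definition V_category :: "('v::complete_lattice \<Rightarrow> 'v \<Rightarrow> 'v) \<Rightarrow> 'v \<Rightarrow> ('x \<Rightarrow> 'x \<Rightarrow> 'v) \<Rightarrow> bool" where
  "V_category tens k a \<longleftrightarrow>
     (\<forall>x. k \<le> a x x) \<and> (\<forall>x y z. tens (a x y) (a y z) \<le> a x z)"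

definition V_functor :: "('x \<Rightarrow> 'x \<Rightarrow> 'v::complete_lattice) \<Rightarrow> ('y \<Rightarrow> 'y \<Rightarrow> 'v) \<Rightarrow> ('x \<Rightarrow> 'y) \<Rightarrow> bool" where
  "V_functor a b f \<longleftrightarrow> (\<forall>x y. a x y \<le> b (f x) (f y))"

definition cauchy_seq_V :: "'v::complete_lattice \<Rightarrow> ('x \<Rightarrow> 'x \<Rightarrow> 'v) \<Rightarrow> (nat \<Rightarrow> 'x) \<Rightarrow> bool" where
  "cauchy_seq_V k a s \<longleftrightarrow> k \<le> (SUP N. INF n\<in>{N..}. INF m\<in>{N..}. a (s n) (s m))"

definition phi_seq :: "('x \<Rightarrow> 'x \<Rightarrow> 'v::complete_lattice) \<Rightarrow> (nat \<Rightarrow> 'x) \<Rightarrow> 'x \<Rightarrow> 'v" where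
  "phi_seq a s x = (SUP N. INF n\<in>{N..}. a (s n) x)"

definition psi_seq :: "('x \<Rightarrow> 'x \<Rightarrow> 'v::complete_lattice) \<Rightarrow> (nat \<Rightarrow> 'x) \<Rightarrow> 'x \<Rightarrow> 'v" where
  "psi_seq a s x = (SUP N. INF n\<in>{N..}. a x (s n))"

end

theory Submission
  imports Defs
begin

lemma q_monoR:
  assumes q: "quantale tens k" and "u \<le> v"
  shows "tens w u \<le> tens w v"
proof -
  have "tens w (Sup {u, v}) = (SUP x\<in>{u,v}. tens w x)" using q unfolding quantale_def by blast
  moreover have "Sup {u, v} = v" using assms(2) by (simp add: sup_absorb2)
  ultimately have "tens w v = sup (tens w u) (tens w v)" by simp
  thus ?thesis by (metis sup.cobounded1)
qed

lemma q_comm: "quantale tens k \<Longrightarrow> tens u v = tens v u"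
  unfolding quantale_def by blast

lemma q_monoL:
  assumes q: "quantale tens k" and "u \<le> v"
  shows "tens u w \<le> tens v w"
  using q_monoR[OF assms] q_comm[OF q] by metis

lemma q_mono2:
  assumes q: "quantale tens k" and "u \<le> v" "u' \<le> v'"
  shows "tens u u' \<le> tens v v'"
  using q_monoR[OF q assms(3)] q_monoL[OF q assms(2)] order_trans by metis

lemma q_SupR:
  assumes q: "quantale tens k"
  shows "tens w (SUP i. F i) = (SUP i. tens w (F i))"
proof -
  have "tens w (Sup (range F)) = (SUP x\<in>range F. tens w x)" using q unfolding quantale_def by blast
  thus ?thesis by (simp add: image_image)
qed

lemma q_SupL:
  assumes q: "quantale tens k"
  shows "tens (SUP i. F i) w = (SUP i. tens (F i) w)"
proof -
  have "tens (SUP i. F i) w = tens w (SUP i. F i)" by (rule q_comm[OF q])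
  also have "\<dots> = (SUP i. tens w (F i))" by (rule q_SupR[OF q])
  also have "\<dots> = (SUP i. tens (F i) w)" using q_comm[OF q, of w] by presburger
  finally show ?thesis .
qed

lemma q_unitL: "quantale tens k \<Longrightarrow> tens k u = u"
  unfolding quantale_def by blast

theorem lemma3p14:
  fixes tens :: "'v::complete_lattice \<Rightarrow> 'v \<Rightarrow> 'v" and k :: 'v
    and a :: "'x \<Rightarrow> 'x \<Rightarrow> 'v" and b :: "'y \<Rightarrow> 'y \<Rightarrow> 'v"
    and f :: "'x \<Rightarrow> 'y" and s :: "nat \<Rightarrow> 'x"
  assumes "quantale tens k"
    and "V_category tens k a" and "V_category tens k b"
    and "V_functor a b f"
    and "cauchy_seq_V k a s"
  shows "(\<forall>y. phi_seq b (f \<circ> s) y = (SUP x. tens (phi_seq a s x) (b (f x) y))) \<and>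
         (\<forall>y. psi_seq b (f \<circ> s) y = (SUP x. tens (b y (f x)) (psi_seq a s x)))"
proof -
  note q = assms(1)
  have btr: "\<And>x y z. tens (b x y) (b y z) \<le> b x z" using assms(3) unfolding V_category_def by blast
  have fm: "\<And>x y. a x y \<le> b (f x) (f y)" using assms(4) unfolding V_functor_def by blast
  define C where "C M = (INF n\<in>{M..}. INF m\<in>{M..}. a (s n) (s m))" for M
  have kC: "k \<le> (SUP M. C M)" using assms(5) unfolding cauchy_seq_V_def C_def by simp
  have Cmono: "C M \<le> C L" if "M \<le> L" for M L
    unfolding C_def
  proof (rule INF_greatest, rule INF_greatest)
    fix n m assume "n \<in> {L..}" "m \<in> {L..}"
    hence "n \<in> {M..}" "m \<in> {M..}" using that by auto
    thus "(INF n\<in>{M..}. INF m\<in>{M..}. a (s n) (s m)) \<le> a (s n) (s m)"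
      by (meson INF_lower2 INF_lower)
  qed
  have phi: "phi_seq b (f \<circ> s) y = (SUP x. tens (phi_seq a s x) (b (f x) y))" for y
  proof (rule antisym)
    define D where "D N = (INF n\<in>{N..}. b (f (s n)) y)" for N
    have Dmono: "D M \<le> D L" if "M \<le> L" for M L
      unfolding D_def using that by (intro INF_superset_mono) auto
    have "phi_seq b (f \<circ> s) y = tens k (SUP N. D N)"
      unfolding phi_seq_def D_def using q_unitL[OF q] by simp
    also have "\<dots> \<le> tens (SUP M. C M) (SUP N. D N)" using q_monoL[OF q kC] .
    also have "\<dots> = (SUP N. SUP M. tens (C M) (D N))"
      by (simp only: q_SupL[OF q] q_SupR[OF q])
    also have "\<dots> \<le> (SUP x. tens (phi_seq a s x) (b (f x) y))"
    proof (rule SUP_least, rule SUP_least)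
      fix N M :: nat
      define L where "L = max M N"
      have "tens (C M) (D N) \<le> tens (C L) (D L)"
        by (rule q_mono2[OF q]) (auto intro: Cmono Dmono simp: L_def)
      also have "\<dots> \<le> tens (phi_seq a s (s L)) (b (f (s L)) y)"
      proof (rule q_mono2[OF q])
        have "C L \<le> (INF n\<in>{L..}. a (s n) (s L))"
          unfolding C_def by (rule INF_mono) (auto intro: INF_lower)
        also have "\<dots> \<le> phi_seq a s (s L)" unfolding phi_seq_def by (rule SUP_upper) simp
        finally show "C L \<le> phi_seq a s (s L)" .
        show "D L \<le> b (f (s L)) y" unfolding D_def by (rule INF_lower) simp
      qed
      also have "\<dots> \<le> (SUP x. tens (phi_seq a s x) (b (f x) y))" by (rule SUP_upper) simp
      finally show "tens (C M) (D N) \<le> (SUP x. tens (phi_seq a s x) (b (f x) y))" .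
    qed
    finally show "phi_seq b (f \<circ> s) y \<le> (SUP x. tens (phi_seq a s x) (b (f x) y))" .
  next
    show "(SUP x. tens (phi_seq a s x) (b (f x) y)) \<le> phi_seq b (f \<circ> s) y"
    proof (rule SUP_least)
      fix x
      have "tens (phi_seq a s x) (b (f x) y) = (SUP N. tens (INF n\<in>{N..}. a (s n) x) (b (f x) y))"
        unfolding phi_seq_def by (rule q_SupL[OF q])
      also have "\<dots> \<le> phi_seq b (f \<circ> s) y"
        unfolding phi_seq_def
      proof (rule SUP_mono)
        fix N
        have "tens (INF n\<in>{N..}. a (s n) x) (b (f x) y) \<le> (INF n\<in>{N..}. b ((f \<circ> s) n) y)"
        proof (rule INF_greatest)
          fix n assume "n \<in> {N..}"
          hence "tens (INF n\<in>{N..}. a (s n) x) (b (f x) y) \<le> tens (b (f (s n)) (f x)) (b (f x) y)"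
            by (meson q_monoL[OF q] INF_lower2 fm)
          also have "\<dots> \<le> b ((f \<circ> s) n) y" using btr by simp
          finally show "tens (INF n\<in>{N..}. a (s n) x) (b (f x) y) \<le> b ((f \<circ> s) n) y" .
        qed
        thus "\<exists>m\<in>UNIV. tens (INF n\<in>{N..}. a (s n) x) (b (f x) y) \<le> (INF n\<in>{m..}. b ((f \<circ> s) n) y)"
          by blast
      qed
      finally show "tens (phi_seq a s x) (b (f x) y) \<le> phi_seq b (f \<circ> s) y" .
    qed
  qed
  have psi: "psi_seq b (f \<circ> s) y = (SUP x. tens (b y (f x)) (psi_seq a s x))" for y
  proof (rule antisym)
    define D where "D N = (INF n\<in>{N..}. b y (f (s n)))" for N
    have Dmono: "D M \<le> D L" if "M \<le> L" for M L
      unfolding D_def using that by (intro INF_superset_mono) auto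
    have "psi_seq b (f \<circ> s) y = tens k (SUP N. D N)"
      unfolding psi_seq_def D_def using q_unitL[OF q] by simp
    also have "\<dots> = tens (SUP N. D N) k" by (rule q_comm[OF q])
    also have "\<dots> \<le> tens (SUP N. D N) (SUP M. C M)" using q_monoR[OF q kC] .
    also have "\<dots> = (SUP N. tens (D N) (SUP M. C M))"
      by (rule q_SupL[OF q])
    also have "\<dots> = (SUP N. SUP M. tens (D N) (C M))"
      by (simp only: q_SupR[OF q])
    also have "\<dots> \<le> (SUP x. tens (b y (f x)) (psi_seq a s x))"
    proof (rule SUP_least, rule SUP_least)
      fix M N :: nat
      define L where "L = max M N"
      have "tens (D N) (C M) \<le> tens (D L) (C L)"
        by (rule q_mono2[OF q]) (auto intro: Cmono Dmono simp: L_def)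
      also have "\<dots> \<le> tens (b y (f (s L))) (psi_seq a s (s L))"
      proof (rule q_mono2[OF q])
        have "C L \<le> (INF m\<in>{L..}. a (s L) (s m))"
          unfolding C_def by (rule INF_lower) simp
        also have "\<dots> \<le> psi_seq a s (s L)" unfolding psi_seq_def by (rule SUP_upper) simp
        finally show "C L \<le> psi_seq a s (s L)" .
        show "D L \<le> b y (f (s L))" unfolding D_def by (rule INF_lower) simp
      qed
      also have "\<dots> \<le> (SUP x. tens (b y (f x)) (psi_seq a s x))" by (rule SUP_upper) simp
      finally show "tens (D N) (C M) \<le> (SUP x. tens (b y (f x)) (psi_seq a s x))" .
    qed
    finally show "psi_seq b (f \<circ> s) y \<le> (SUP x. tens (b y (f x)) (psi_seq a s x))" .
  next
    show "(SUP x. tens (b y (f x)) (psi_seq a s x)) \<le> psi_seq b (f \<circ> s) y"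
    proof (rule SUP_least)
      fix x
      have "tens (b y (f x)) (psi_seq a s x) = (SUP N. tens (b y (f x)) (INF n\<in>{N..}. a x (s n)))"
        unfolding psi_seq_def by (rule q_SupR[OF q])
      also have "\<dots> \<le> psi_seq b (f \<circ> s) y"
        unfolding psi_seq_def
      proof (rule SUP_mono)
        fix N
        have "tens (b y (f x)) (INF n\<in>{N..}. a x (s n)) \<le> (INF n\<in>{N..}. b y ((f \<circ> s) n))"
        proof (rule INF_greatest)
          fix n assume "n \<in> {N..}"
          hence "tens (b y (f x)) (INF n\<in>{N..}. a x (s n)) \<le> tens (b y (f x)) (b (f x) (f (s n)))"
            by (meson q_monoR[OF q] INF_lower2 fm)
          also have "\<dots> \<le> b y ((f \<circ> s) n)" using btr by simp
          finally show "tens (b y (f x)) (INF n\<in>{N..}. a x (s n)) \<le> b y ((f \<circ> s) n)" .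
        qed
        thus "\<exists>m\<in>UNIV. tens (b y (f x)) (INF n\<in>{N..}. a x (s n)) \<le> (INF n\<in>{m..}. b y ((f \<circ> s) n))"
          by blast
      qed
      finally show "tens (b y (f x)) (psi_seq a s x) \<le> psi_seq b (f \<circ> s) y" .
    qed
  qed
  show ?thesis using phi psi by blast
qed

end
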